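(* Let $E$ be an acyclic directed graph and let $G(E)$ carry a Hausdorff topology $\tau$ making it a topological semigroup. Then $(G(E),\tau)$ embeds (as a subsemigroup and topological subspace) densely into a CLP-compact topological semigroup $S$ if and only if $(G(E),\tau)$ is compact, i.e., $\tau=\tau_c$.
   Context: All spaces are Hausdorff. CLP-compact: every cover by clopen sets has a finite subcover. A directed graph $E=(E^0,E^1,r,s)$ has vertex set $E^0$, edge set $E^1$, source and range maps $s,r:E^1\to E^0$; paths are vertices (length zero) and sequences of edges $e_1\ldots e_n$ with $r(e_i)=s(e_{i+1})$; a cycle is a path $x$ of non-zero length with $s(x)=r(x)$; $E$ is acyclic if it has no cycles. The graph inverse semigroup $G(E)$ is the semigroup with zero $0$ generated by $E^0$, $E^1$, $E^{-1}=\{e^{-1}\mid e\in E^1\}$ subject to: for $a,b\in E^0$, $e,f\in E^1$: $ab=a$ if $a=b$, else $0$; $s(e)e=er(e)=e$; $e^{-1}s(e)=r(e)e^{-1}=e^{-1}$; $e^{-1}f=r(e)$ if $e=f$, else $0$. Non-zero elements are uniquely $uv^{-1}$ with $u,v$ paths, $r(u)=r(v)$. The topology $\tau_c$ on $G(E)$: non-zero elements are isolated and the neighborhoods of $0$ are the cofinite sets containing $0$. *)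

theory Defs
  imports "HOL-Analysis.Analysis"
begin

text \<open>We encode a path by its list of edges together
  with its terminal vertex w (its range); for the empty list the path is the vertex w.\<close>

definition gpath :: "'v set \<Rightarrow> 'e set \<Rightarrow> ('e \<Rightarrow> 'v) \<Rightarrow> ('e \<Rightarrow> 'v) \<Rightarrow> 'e list \<Rightarrow> 'v \<Rightarrow> bool" where
  "gpath V Ed sr rg p w \<longleftrightarrow> w \<in> V \<and> set p \<subseteq> Ed \<and> (p \<noteq> [] \<longrightarrow> rg (last p) = w)
     \<and> (\<forall>i. Suc i < length p \<longrightarrow> rg (p ! i) = sr (p ! Suc i))"

definition pstart :: "('e \<Rightarrow> 'v) \<Rightarrow> 'v \<Rightarrow> 'e list \<Rightarrow> 'v" where
  "pstart sr w p = (if p = [] then w else sr (hd p))"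

definition graph_acyclic :: "'v set \<Rightarrow> 'e set \<Rightarrow> ('e \<Rightarrow> 'v) \<Rightarrow> ('e \<Rightarrow> 'v) \<Rightarrow> bool" where
  "graph_acyclic V Ed sr rg \<longleftrightarrow> \<not> (\<exists>p w. p \<noteq> [] \<and> gpath V Ed sr rg p w \<and> pstart sr w p = w)"

text \<open>Elements of the graph inverse semigroup: None is 0, Some (p, q, w) is u v^{-1}
  where u, v are the paths encoded by (p, w) and (q, w) (so r(u) = r(v) = w).\<close>
type_synonym ('v, 'e) gis = "('e list \<times> 'e list \<times> 'v) option"

definition gis_carrier :: "'v set \<Rightarrow> 'e set \<Rightarrow> ('e \<Rightarrow> 'v) \<Rightarrow> ('e \<Rightarrow> 'v) \<Rightarrow> ('v, 'e) gis set" where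
  "gis_carrier V Ed sr rg = insert None
     {Some (p, q, w) | p q w. gpath V Ed sr rg p w \<and> gpath V Ed sr rg q w}"

text \<open>Multiplication (u v^{-1})(x y^{-1}) = (u z) y^{-1} if x = v z, = u (y z)^{-1} if v = x z,
  and 0 otherwise.\<close>
definition gis_mult :: "('e \<Rightarrow> 'v) \<Rightarrow> ('v, 'e) gis \<Rightarrow> ('v, 'e) gis \<Rightarrow> ('v, 'e) gis" where
  "gis_mult sr a b = (case a of None \<Rightarrow> None | Some (p, q, w) \<Rightarrow>
     (case b of None \<Rightarrow> None | Some (p', q', w') \<Rightarrow>
       (if \<exists>z. p' = q @ z \<and> pstart sr w' z = w then Some (p @ drop (length q) p', q', w')
        else if \<exists>z. q = p' @ z \<and> pstart sr w z = w' then Some (p, q' @ drop (length p') q, w)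
        else None)))"

definition is_tau_c :: "'v set \<Rightarrow> 'e set \<Rightarrow> ('e \<Rightarrow> 'v) \<Rightarrow> ('e \<Rightarrow> 'v) \<Rightarrow> ('v, 'e) gis topology \<Rightarrow> bool" where
  "is_tau_c V Ed sr rg T \<longleftrightarrow> (\<forall>U. openin T U \<longleftrightarrow>
     U \<subseteq> gis_carrier V Ed sr rg \<and> (None \<in> U \<longrightarrow> finite (gis_carrier V Ed sr rg - U)))"

definition topological_semigroup :: "'a topology \<Rightarrow> ('a \<Rightarrow> 'a \<Rightarrow> 'a) \<Rightarrow> bool" where
  "topological_semigroup T m \<longleftrightarrow>
     (\<forall>x\<in>topspace T. \<forall>y\<in>topspace T. m x y \<in> topspace T) \<and>
     (\<forall>x\<in>topspace T. \<forall>y\<in>topspace T. \<forall>z\<in>topspace T. m (m x y) z = m x (m y z)) \<and>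
     continuous_map (prod_topology T T) T (\<lambda>(x, y). m x y)"

definition CLP_compact :: "'a topology \<Rightarrow> bool" where
  "CLP_compact T \<longleftrightarrow> (\<forall>\<U>. (\<forall>U\<in>\<U>. closedin T U \<and> openin T U) \<and> topspace T \<subseteq> \<Union>\<U> \<longrightarrow>
     (\<exists>\<F>\<subseteq>\<U>. finite \<F> \<and> topspace T \<subseteq> \<Union>\<F>))"

definition dense_CLP_embedding ::
  "'a topology \<Rightarrow> ('a \<Rightarrow> 'a \<Rightarrow> 'a) \<Rightarrow> 'b topology \<Rightarrow> ('b \<Rightarrow> 'b \<Rightarrow> 'b) \<Rightarrow> ('a \<Rightarrow> 'b) \<Rightarrow> bool" where
  "dense_CLP_embedding T m S mS h \<longleftrightarrow>
     Hausdorff_space S \<and> topological_semigroup S mS \<and> CLP_compact S \<and>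
     embedding_map T S h \<and>
     (\<forall>x\<in>topspace T. \<forall>y\<in>topspace T. h (m x y) = mS (h x) (h y)) \<and>
     S closure_of (h ` topspace T) = topspace S"

end

theory Submission
  imports Defs
begin
lemma gpath_suffix:
  assumes "gpath V Ed sr rg (q @ z) w" "z \<noteq> []"
  shows "gpath V Ed sr rg z w"
proof -
  have g: "w \<in> V" "set (q@z) \<subseteq> Ed" "rg (last (q@z)) = w"
      "\<And>i. Suc i < length (q@z) \<Longrightarrow> rg ((q@z)!i) = sr ((q@z)! Suc i)"
    using assms unfolding gpath_def by auto
  have "rg (z!i) = sr (z ! Suc i)" if "Suc i < length z" for i
    using g(4)[of "length q + i"] that by (simp add: nth_append)
  then show ?thesis using g assms(2) unfolding gpath_def by auto
qed

locale gisl =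
  fixes V :: "'v set" and Ed :: "'e set" and sr rg :: "'e \<Rightarrow> 'v"
  assumes graph: "\<forall>e\<in>Ed. sr e \<in> V \<and> rg e \<in> V"
    and acyc: "graph_acyclic V Ed sr rg"
begin

abbreviation "G \<equiv> gis_carrier V Ed sr rg"
abbreviation "m \<equiv> gis_mult sr"

lemma no_cycle: "gpath V Ed sr rg z w \<Longrightarrow> pstart sr w z = w \<Longrightarrow> z = []"
  using acyc by (auto simp: graph_acyclic_def)

lemma no_cycle_suffix: "gpath V Ed sr rg (q @ z) w \<Longrightarrow> pstart sr w z = w \<Longrightarrow> z = []"
  using no_cycle gpath_suffix by metis

lemma inG: "Some (p,q,w) \<in> G \<longleftrightarrow> gpath V Ed sr rg p w \<and> gpath V Ed sr rg q w"
  by (auto simp: gis_carrier_def)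

lemma gpath_V: "gpath V Ed sr rg p w \<Longrightarrow> w \<in> V"
  by (simp add: gpath_def)

lemma gpath_nil: "gpath V Ed sr rg [] w \<longleftrightarrow> w \<in> V"
  by (simp add: gpath_def)

lemma m_None1[simp]: "m None x = None" by (simp add: gis_mult_def)
lemma m_None2[simp]: "m x None = None" by (cases x) (auto simp: gis_mult_def)

lemma V1: "m (Some ([],[],w)) (Some (p,q,w')) \<noteq> None \<Longrightarrow> pstart sr w' p = w"
  by (auto simp: gis_mult_def pstart_def split: if_splits)

lemma V2: "m (Some (p,q,w')) (Some ([],[],w)) \<noteq> None \<Longrightarrow> pstart sr w' q = w"
  by (auto simp: gis_mult_def pstart_def split: if_splits)

lemma V3: "Some (p,q,w') \<in> G \<Longrightarrow> m (Some (p,q,w')) (Some (p,q,w')) \<noteq> None \<Longrightarrow> p = q"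
  unfolding inG gis_mult_def
  by (auto split: if_splits dest: no_cycle_suffix)

lemma V5: "m (Some (p,p,w')) (Some (p0,p0,w0)) \<noteq> None \<Longrightarrow> p \<noteq> [] \<Longrightarrow> p0 \<noteq> [] \<Longrightarrow> hd p = hd p0"
  by (auto simp: gis_mult_def split: if_splits)

lemma V6: assumes "Some (p,p,w') \<in> G" "p \<noteq> []" "hd p = e"
  shows "m (Some (p,p,w')) (Some ([e],[e],rg e)) = Some (p,p,w')"
proof -
  obtain p' where p: "p = e # p'" using assms by (cases p) auto
  have gp: "gpath V Ed sr rg p w'" using assms(1) inG by auto
  show ?thesis
  proof (cases "p' = []")
    case True
    then have "w' = rg e" using gp p by (auto simp: gpath_def)
    then show ?thesis using True p by (auto simp: gis_mult_def pstart_def)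
  next
    case False
    have "rg (p!0) = sr (p!1)" using gp p False unfolding gpath_def by auto
    then have "pstart sr w' p' = rg e" using p False by (cases p') (auto simp: pstart_def)
    then show ?thesis using False p by (auto simp: gis_mult_def)
  qed
qed

lemma V7: "sr e = w \<Longrightarrow> m (Some ([],[],w)) (Some ([e],[e],rg e)) = Some ([e],[e],rg e)"
  by (auto simp: gis_mult_def pstart_def)

lemma W0W0: "m (Some ([],[],w)) (Some ([],[],w)) = Some ([],[],w)"
  by (auto simp: gis_mult_def pstart_def)

end

context gisl begin

lemma right_v_a: "m (Some (z,q,w')) (Some (v,[],w)) = Some ([],[],w) \<Longrightarrow> z = [] \<and> q = v \<and> w' = w"
  by (auto simp: gis_mult_def pstart_def split: if_splits)

lemma right_v_b: "m (Some ([],q,w)) (Some (v,[],w)) = Some ([],[],w) \<Longrightarrow> q = v"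
  by (auto simp: gis_mult_def pstart_def split: if_splits)

lemma Fpre:
  assumes "m (m (Some ([],u,w)) (Some (p,q,w'))) (Some (v,[],w)) = Some ([],[],w)"
  shows "Some (p,q,w') \<in> (\<lambda>i. Some (take i u, take (length v - (length u - i)) v, pstart sr w (drop i u))) ` {..length u}"
proof (cases "\<exists>z. p = u @ z \<and> pstart sr w' z = w")
  case True
  then obtain z where z: "p = u @ z" "pstart sr w' z = w" by blast
  have "m (Some ([],u,w)) (Some (p,q,w')) = Some (z,q,w')"
    using True z by (simp add: gis_mult_def)
  then have "z = [] \<and> q = v \<and> w' = w" using assms right_v_a by simp
  then show ?thesis using z
    by (intro image_eqI[where x="length u"]) (auto simp: pstart_def)
next
  case False
  note F1 = False
  show ?thesis
  proof (cases "\<exists>z. u = p @ z \<and> pstart sr w z = w'")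
    case True
    then obtain z where z: "u = p @ z" "pstart sr w z = w'" by blast
    have "m (Some ([],u,w)) (Some (p,q,w')) = Some ([],q @ z,w)"
      using True F1 z by (simp add: gis_mult_def pstart_def)
    then have "q @ z = v" using assms right_v_b by simp
    then show ?thesis using z
      by (intro image_eqI[where x="length p"]) auto
  next
    case False
    then have "m (Some ([],u,w)) (Some (p,q,w')) = None"
      using F1 by (simp add: gis_mult_def)
    then show ?thesis using assms by simp
  qed
qed

lemma phi_a: "m (m (Some ([],u,w)) (Some (u,v,w))) (Some (v,[],w)) = Some ([],[],w)"
  by (simp add: gis_mult_def pstart_def)

end

lemma ts_nbhd:
  assumes "topological_semigroup T f" "x \<in> topspace T" "y \<in> topspace T" "openin T W" "f x y \<in> W"
  obtains A B where "openin T A" "openin T B" "x \<in> A" "y \<in> B" "\<And>a b. a \<in> A \<Longrightarrow> b \<in> B \<Longrightarrow> f a b \<in> W"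
proof -
  have c: "continuous_map (prod_topology T T) T (\<lambda>(x, y). f x y)"
    using assms(1) by (simp add: topological_semigroup_def)
  define S where "S = {z \<in> topspace (prod_topology T T). (\<lambda>(x, y). f x y) z \<in> W}"
  have o: "openin (prod_topology T T) S"
    unfolding S_def using openin_continuous_map_preimage[OF c assms(4)] .
  have xyS: "(x,y) \<in> S"
    using assms unfolding S_def by auto
  note H = o[unfolded openin_prod_topology_alt, rule_format, OF xyS]
  then obtain A B where AB: "openin T A" "openin T B" "x \<in> A" "y \<in> B" "A \<times> B \<subseteq> S"
    by blast
  have "f a b \<in> W" if "a \<in> A" "b \<in> B" for a b
  proof -
    have "(a,b) \<in> S" using AB that by blast
    then show ?thesis unfolding S_def by simp
  qed
  then show ?thesis using that AB by blast
qed

lemma ts_right_cont: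
  assumes "topological_semigroup T f" "c \<in> topspace T"
  shows "continuous_map T T (\<lambda>z. f z c)"
proof -
  have c: "continuous_map (prod_topology T T) T (\<lambda>(x, y). f x y)"
    using assms(1) by (simp add: topological_semigroup_def)
  have p: "continuous_map T (prod_topology T T) (\<lambda>z. (z, c))"
    using assms(2) by (intro continuous_map_pairedI) auto
  show ?thesis using continuous_map_compose[OF p c] by (simp add: o_def)
qed

lemma ts_left_cont:
  assumes "topological_semigroup T f" "c \<in> topspace T"
  shows "continuous_map T T (\<lambda>z. f c z)"
proof -
  have c: "continuous_map (prod_topology T T) T (\<lambda>(x, y). f x y)"
    using assms(1) by (simp add: topological_semigroup_def)
  have p: "continuous_map T (prod_topology T T) (\<lambda>z. (c, z))"
    using assms(2) by (intro continuous_map_pairedI) auto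
  show ?thesis using continuous_map_compose[OF p c] by (simp add: o_def)
qed

lemma haus_sep:
  assumes "Hausdorff_space T" "x \<in> topspace T" "y \<in> topspace T" "x \<noteq> y"
  obtains U W where "openin T U" "openin T W" "x \<in> U" "y \<in> W" "U \<inter> W = {}"
proof -
  obtain U W where "openin T U" "openin T W" "x \<in> U" "y \<in> W" "disjnt U W"
    using assms unfolding Hausdorff_space_def by blast
  then show ?thesis using that by (simp add: disjnt_def)
qed

locale gist = gisl V Ed sr rg for V :: "'v set" and Ed :: "'e set" and sr rg :: "'e \<Rightarrow> 'v" +
  fixes \<tau> :: "('v, 'e) gis topology"
  assumes carrier: "topspace \<tau> = gis_carrier V Ed sr rg"
    and haus: "Hausdorff_space \<tau>"
    and tsg: "topological_semigroup \<tau> (gis_mult sr)"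
begin

lemma None_G: "None \<in> topspace \<tau>" by (simp add: carrier gis_carrier_def)

lemma iso_vertex:
  assumes wV: "w \<in> V"
  shows "openin \<tau> {Some ([],[],w)}"
proof -
  define W0 where "W0 = (Some ([],[],w) :: ('v,'e) gis)"
  have W0G: "W0 \<in> topspace \<tau>" using carrier wV inG gpath_nil W0_def by simp
  obtain W Z where WO: "openin \<tau> W" "openin \<tau> Z" "W0 \<in> W" "None \<in> Z" "W \<inter> Z = {}"
    using haus_sep[OF haus W0G None_G] W0_def by blast
  have "m W0 W0 \<in> W" using W0W0 WO W0_def by simp
  then obtain A B where AB: "openin \<tau> A" "openin \<tau> B" "W0 \<in> A" "W0 \<in> B"
      "\<And>a b. a \<in> A \<Longrightarrow> b \<in> B \<Longrightarrow> m a b \<in> W"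
    using ts_nbhd[OF tsg W0G W0G WO(1)] by metis
  define N where "N = A \<inter> B"
  have Nop: "openin \<tau> N" "W0 \<in> N" using AB N_def by auto
  have Nprop: "m y z \<noteq> None" if "y \<in> N" "z \<in> N" for y z
  proof
    assume "m y z = None"
    then show False using AB(5)[of y z] that WO(4,5) N_def by auto
  qed
  have NsubG: "N \<subseteq> G" using openin_subset[OF Nop(1)] carrier by simp
  have key: "\<exists>p w'. y = Some (p,p,w') \<and> p \<noteq> [] \<and> sr (hd p) = w \<and> hd p \<in> Ed \<and> y \<in> G"
    if "y \<in> N" "y \<noteq> W0" for y
  proof -
    have yG: "y \<in> G" using that NsubG by auto
    have "m y y \<noteq> None" using Nprop that by simp
    then obtain p q w' where y: "y = Some (p,q,w')" by (cases y) auto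
    have gp: "gpath V Ed sr rg p w'" using yG y inG by simp
    have "pstart sr w' p = w" using V1 Nprop[OF Nop(2) that(1)] y W0_def by simp
    moreover have "p = q" using V3 yG y Nprop[OF that(1) that(1)] by simp
    moreover have "p \<noteq> []"
    proof
      assume "p = []"
      then show False using \<open>pstart sr w' p = w\<close> \<open>p = q\<close> y that(2) W0_def by (simp add: pstart_def)
    qed
    moreover have "hd p \<in> Ed" using gp \<open>p \<noteq> []\<close> by (auto simp: gpath_def)
    ultimately show ?thesis using y yG by (auto simp: pstart_def)
  qed
  show ?thesis
  proof (cases "N \<subseteq> {W0}")
    case True
    then have "N = {W0}" using Nop by auto
    then show ?thesis using Nop W0_def by simp
  next
    case False
    then obtain y0 where y0: "y0 \<in> N" "y0 \<noteq> W0" by auto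
    then obtain p0 w0' where p0: "y0 = Some (p0,p0,w0')" "p0 \<noteq> []" "sr (hd p0) = w" "hd p0 \<in> Ed"
      using key by blast
    define e where "e = hd p0"
    define E1 where "E1 = Some ([e],[e],rg e)"
    have gs: "gpath V Ed sr rg [e] (rg e)" using graph p0(4) e_def by (simp add: gpath_def)
    have E1G: "E1 \<in> topspace \<tau>" unfolding carrier E1_def inG using gs by simp
    have "E1 \<noteq> W0" using E1_def W0_def by simp
    then obtain W1 W2 where W12: "openin \<tau> W1" "openin \<tau> W2" "W0 \<in> W1" "E1 \<in> W2" "W1 \<inter> W2 = {}"
      using haus_sep[OF haus W0G E1G] by blast
    define M where "M = {z \<in> topspace \<tau>. m z E1 \<in> W2}"
    have Mop: "openin \<tau> M"
      unfolding M_def by (rule openin_continuous_map_preimage[OF ts_right_cont[OF tsg E1G] W12(2)])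
    have "m W0 E1 = E1" using V7[of e w] p0(3) e_def E1_def W0_def by simp
    then have W0M: "W0 \<in> M" using M_def W0G W12 by simp
    define N' where "N' = N \<inter> M \<inter> W1"
    have N'op: "openin \<tau> N'" using N'_def Nop Mop W12 by auto
    have "N' = {W0}"
    proof
      show "{W0} \<subseteq> N'" using N'_def Nop W0M W12 by auto
    next
      show "N' \<subseteq> {W0}"
      proof
        fix y assume yN': "y \<in> N'"
        show "y \<in> {W0}"
        proof (rule ccontr)
          assume "y \<notin> {W0}"
          then obtain p w' where yy: "y = Some (p,p,w')" "p \<noteq> []" "y \<in> G"
            using key[of y] yN' N'_def by auto
          have "hd p = e" using V5[of p w' p0 w0'] Nprop[of y y0] yN' N'_def y0 yy p0 e_def by auto
          then have "m y E1 = y" using V6[of p w' e] yy E1_def by simp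
          then have "y \<in> W2" using yN' N'_def M_def by auto
          then show False using yN' N'_def W12(5) by auto
        qed
      qed
    qed
    then show ?thesis using N'op W0_def by simp
  qed
qed

lemma iso:
  assumes "a \<in> topspace \<tau>" "a \<noteq> None"
  shows "openin \<tau> {a}"
proof -
  obtain u v w where a: "a = Some (u,v,w)" using assms by (cases a) auto
  have gu: "gpath V Ed sr rg u w" and gv: "gpath V Ed sr rg v w"
    using assms(1) a carrier inG by auto
  have wV: "w \<in> V" using gu gpath_V by auto
  define Ui where "Ui = (Some ([],u,w) :: ('v,'e) gis)"
  define Vv where "Vv = (Some (v,[],w) :: ('v,'e) gis)"
  have UiG: "Ui \<in> topspace \<tau>" using Ui_def carrier inG gu gpath_nil wV by simp
  have VvG: "Vv \<in> topspace \<tau>" using Vv_def carrier inG gv gpath_nil wV by simp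
  define \<phi> where "\<phi> = (\<lambda>z. m (m Ui z) Vv)"
  have phi_eq: "\<phi> = (\<lambda>z. m z Vv) \<circ> (\<lambda>z. m Ui z)" by (simp add: \<phi>_def fun_eq_iff)
  have c\<phi>: "continuous_map \<tau> \<tau> \<phi>"
    unfolding phi_eq by (rule continuous_map_compose[OF ts_left_cont[OF tsg UiG] ts_right_cont[OF tsg VvG]])
  define F where "F = {x \<in> topspace \<tau>. \<phi> x \<in> {Some ([],[],w)}}"
  have Fop: "openin \<tau> F" unfolding F_def
    by (rule openin_continuous_map_preimage[OF c\<phi> iso_vertex[OF wV]])
  have "F \<subseteq> (\<lambda>i. Some (take i u, take (length v - (length u - i)) v, pstart sr w (drop i u))) ` {..length u}"
  proof
    fix x assume "x \<in> F"
    then have x: "\<phi> x = Some ([],[],w)" using F_def by simp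
    have "x \<noteq> None" using x unfolding \<phi>_def by (cases x) simp_all
    then obtain p q w' where xs: "x = Some (p,q,w')" by (cases x) auto
    have "m (m (Some ([],u,w)) (Some (p,q,w'))) (Some (v,[],w)) = Some ([],[],w)"
      using x unfolding xs \<phi>_def Ui_def Vv_def .
    from Fpre[OF this] show "x \<in> (\<lambda>i. Some (take i u, take (length v - (length u - i)) v, pstart sr w (drop i u))) ` {..length u}"
      unfolding xs .
  qed
  then have fF: "finite F" by (meson finite_atMost finite_imageI finite_subset)
  have aF: "a \<in> F" using F_def assms(1) phi_a \<phi>_def Ui_def Vv_def a by simp
  have t1: "\<forall>S. finite S \<and> S \<subseteq> topspace \<tau> \<longrightarrow> closedin \<tau> S"
    using Hausdorff_imp_t1_space[OF haus] unfolding t1_space_closedin_finite .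
  have "F - {a} \<subseteq> topspace \<tau>" using openin_subset[OF Fop] by blast
  then have "closedin \<tau> (F - {a})" using t1 fF by simp
  then have "openin \<tau> (F - (F - {a}))" by (rule openin_diff[OF Fop])
  moreover have "F - (F - {a}) = {a}" using aF by auto
  ultimately show ?thesis by simp
qed

end

context gist begin

lemma cofinite_compact:
  assumes cof: "\<And>U. openin \<tau> U \<Longrightarrow> None \<in> U \<Longrightarrow> finite (topspace \<tau> - U)"
  shows "compact_space \<tau>"
  unfolding compact_space_alt
proof (intro allI impI)
  fix \<U> assume H: "(\<forall>U\<in>\<U>. openin \<tau> U) \<and> topspace \<tau> \<subseteq> \<Union>\<U>"
  then obtain U0 where U0: "U0 \<in> \<U>" "None \<in> U0" using None_G by blast
  define C where "C = topspace \<tau> - U0"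
  have fC: "finite C" using cof U0 H C_def by auto
  define f where "f = (\<lambda>c. SOME U. U \<in> \<U> \<and> c \<in> U)"
  have f: "f c \<in> \<U> \<and> c \<in> f c" if "c \<in> C" for c
  proof -
    have "\<exists>U. U \<in> \<U> \<and> c \<in> U" using that H C_def by auto
    then show ?thesis unfolding f_def by (rule someI_ex)
  qed
  show "\<exists>\<F>. finite \<F> \<and> \<F> \<subseteq> \<U> \<and> topspace \<tau> \<subseteq> \<Union>\<F>"
    apply (rule exI[of _ "insert U0 (f ` C)"])
    using fC f U0 C_def by auto
qed

lemma compact_cofinite:
  assumes "compact_space \<tau>" "openin \<tau> U" "None \<in> U"
  shows "finite (topspace \<tau> - U)"
proof -
  define C where "C = topspace \<tau> - U"
  have "closedin \<tau> C" unfolding C_def by (rule closedin_diff[OF closedin_topspace assms(2)])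
  then have cC: "compactin \<tau> C" using closedin_compact_space assms(1) by blast
  have A1: "\<forall>X\<in>(\<lambda>x. {x}) ` C. openin \<tau> X"
  proof
    fix X assume "X \<in> (\<lambda>x. {x}) ` C"
    then obtain x where x: "x \<in> C" "X = {x}" by blast
    have x1: "x \<in> topspace \<tau>" using x(1) unfolding C_def by blast
    have x2: "x \<noteq> None"
    proof
      assume "x = None" then show False using x(1) assms(3) unfolding C_def by simp
    qed
    show "openin \<tau> X" unfolding x(2) by (rule iso[OF x1 x2])
  qed
  have A2: "C \<subseteq> \<Union>((\<lambda>x. {x}) ` C)" by blast
  have "\<exists>F. finite F \<and> F \<subseteq> (\<lambda>x. {x}) ` C \<and> C \<subseteq> \<Union>F"
    using conjunct2[OF cC[unfolded compactin_def], rule_format, OF conjI[OF A1 A2]] .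
  then obtain F where F: "finite F" "F \<subseteq> (\<lambda>x. {x}) ` C" "C \<subseteq> \<Union>F" by blast
  have "finite (\<Union>F)"
  proof (rule finite_Union)
    show "finite F" by (rule F(1))
    fix M assume "M \<in> F" then show "finite M" using F(2) by blast
  qed
  then have "finite C" using F(3) by (rule finite_subset[rotated])
  then show ?thesis using C_def by simp
qed

lemma tau_c_iff: "compact_space \<tau> \<longleftrightarrow> is_tau_c V Ed sr rg \<tau>"
proof
  assume c: "compact_space \<tau>"
  show "is_tau_c V Ed sr rg \<tau>"
    unfolding is_tau_c_def
  proof (intro allI iffI)
    fix U assume "openin \<tau> U"
    then show "U \<subseteq> G \<and> (None \<in> U \<longrightarrow> finite (G - U))"
      using compact_cofinite[OF c \<open>openin \<tau> U\<close>] openin_subset[OF \<open>openin \<tau> U\<close>] carrier by simp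
  next
    fix U assume H: "U \<subseteq> G \<and> (None \<in> U \<longrightarrow> finite (G - U))"
    show "openin \<tau> U"
    proof (cases "None \<in> U")
      case True
      then have "closedin \<tau> (G - U)"
        using H Hausdorff_imp_t1_space[OF haus] carrier unfolding t1_space_closedin_finite by auto
      then have "openin \<tau> (topspace \<tau> - (G - U))" by (simp add: closedin_def)
      moreover have "topspace \<tau> - (G - U) = U" using H carrier by auto
      ultimately show ?thesis by simp
    next
      case False
      show ?thesis unfolding openin_subopen[of \<tau> U]
      proof
        fix x assume "x \<in> U"
        have "x \<noteq> None"
        proof
          assume "x = None" then show False using False \<open>x \<in> U\<close> by simp
        qed
        moreover have "x \<in> topspace \<tau>" using H carrier \<open>x \<in> U\<close> by blast
        ultimately have "x \<in> topspace \<tau>" "x \<noteq> None" by blast+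
        then have "openin \<tau> {x}" by (rule iso)
        then show "\<exists>T. openin \<tau> T \<and> x \<in> T \<and> T \<subseteq> U" using \<open>x \<in> U\<close> by blast
      qed
    qed
  qed
next
  assume t: "is_tau_c V Ed sr rg \<tau>"
  show "compact_space \<tau>"
  proof (rule cofinite_compact)
    fix U assume "openin \<tau> U" "None \<in> U"
    then show "finite (topspace \<tau> - U)"
      using t[unfolded is_tau_c_def, rule_format, of U] carrier by simp
  qed
qed

lemma self_embedding:
  assumes "compact_space \<tau>"
  shows "dense_CLP_embedding \<tau> m \<tau> m id"
  unfolding dense_CLP_embedding_def
proof (intro conjI)
  show "CLP_compact \<tau>" unfolding CLP_compact_def
  proof (intro allI impI)
    fix \<U> assume H: "(\<forall>U\<in>\<U>. closedin \<tau> U \<and> openin \<tau> U) \<and> topspace \<tau> \<subseteq> \<Union>\<U>"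
    then have "(\<forall>U\<in>\<U>. openin \<tau> U) \<and> topspace \<tau> \<subseteq> \<Union>\<U>" by blast
    from assms[unfolded compact_space_alt, rule_format, OF this]
    obtain \<F> where "finite \<F>" "\<F> \<subseteq> \<U>" "topspace \<tau> \<subseteq> \<Union>\<F>"
      by blast
    then show "\<exists>\<F>\<subseteq>\<U>. finite \<F> \<and> topspace \<tau> \<subseteq> \<Union>\<F>" by blast
  qed
  show "embedding_map \<tau> \<tau> id" unfolding embedding_map_def by simp
  show "Hausdorff_space \<tau>" by (rule haus)
  show "topological_semigroup \<tau> m" by (rule tsg)
  show "\<forall>x\<in>topspace \<tau>. \<forall>y\<in>topspace \<tau>. id (m x y) = m (id x) (id y)" by simp
  show "\<tau> closure_of id ` topspace \<tau> = topspace \<tau>" by simp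
qed

end

context gisl begin

lemma VO: "w \<noteq> w' \<Longrightarrow> m (Some ([],[],w)) (Some ([],[],w')) = None"
  by (auto simp: gis_mult_def pstart_def)
lemma PV: "m (Some (p,[],w)) (Some ([],[],w)) = Some (p,[],w)"
  by (simp add: gis_mult_def pstart_def)
lemma PQ: "m (Some (p,[],w)) (Some ([],q,w)) = Some (p,q,w)"
  by (simp add: gis_mult_def pstart_def)
lemma EE: "m (Some (p,p,w)) (Some (p,p,w)) = Some (p,p,w)"
  by (simp add: gis_mult_def pstart_def)
lemma EC: "m (Some (p,p,w)) (Some (p,q,w)) = Some (p,q,w)"
  by (simp add: gis_mult_def pstart_def)
lemma CF: "m (Some (p,q,w)) (Some (q,q,w)) = Some (p,q,w)"
  by (simp add: gis_mult_def pstart_def)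

lemma ORTH:
  assumes "gpath V Ed sr rg p w" "gpath V Ed sr rg p' w" "p \<noteq> p'"
  shows "m (Some (p,p,w)) (Some (p',p',w)) = None"
proof -
  have c1: "\<not> (\<exists>z. p' = p @ z \<and> pstart sr w z = w)"
  proof
    assume "\<exists>z. p' = p @ z \<and> pstart sr w z = w"
    then obtain z where z: "p' = p @ z" "pstart sr w z = w" by blast
    then have "z = []" using no_cycle_suffix assms(2) by metis
    then show False using z assms(3) by simp
  qed
  have c2: "\<not> (\<exists>z. p = p' @ z \<and> pstart sr w z = w)"
  proof
    assume "\<exists>z. p = p' @ z \<and> pstart sr w z = w"
    then obtain z where z: "p = p' @ z" "pstart sr w z = w" by blast
    then have "z = []" using no_cycle_suffix assms(1) by metis
    then show False using z assms(3) by simp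
  qed
  show ?thesis using c1 c2 by (simp add: gis_mult_def)
qed

end

lemma choose_inj:
  assumes "infinite (f ` C)"
  shows "\<exists>I\<subseteq>C. infinite I \<and> inj_on f I"
proof -
  define g where "g = (\<lambda>y. SOME c. c \<in> C \<and> f c = y)"
  have g: "g y \<in> C \<and> f (g y) = y" if "y \<in> f ` C" for y
  proof -
    have "\<exists>c. c \<in> C \<and> f c = y" using that by blast
    then show ?thesis unfolding g_def by (rule someI_ex)
  qed
  define I where "I = g ` (f ` C)"
  have "I \<subseteq> C" using g I_def by blast
  moreover have "inj_on f I"
  proof (rule inj_onI)
    fix x y assume "x \<in> I" "y \<in> I" "f x = f y"
    then obtain a b where "a \<in> f ` C" "b \<in> f ` C" "x = g a" "y = g b" using I_def by blast
    then show "x = y" using g \<open>f x = f y\<close> by metis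
  qed
  moreover have "f ` I = f ` C"
  proof
    show "f ` I \<subseteq> f ` C" using \<open>I \<subseteq> C\<close> by blast
    show "f ` C \<subseteq> f ` I"
    proof
      fix y assume "y \<in> f ` C"
      then have "g y \<in> I" "f (g y) = y" using g I_def by auto
      then show "y \<in> f ` I" by (metis imageI)
    qed
  qed
  then have "infinite I" using assms by (metis finite_imageI)
  ultimately show ?thesis by blast
qed

locale gemb = gist V Ed sr rg \<tau>
  for V :: "'v set" and Ed :: "'e set" and sr rg :: "'e \<Rightarrow> 'v" and \<tau> :: "('v, 'e) gis topology" +
  fixes S :: "'s topology" and mS :: "'s \<Rightarrow> 's \<Rightarrow> 's" and h :: "('v, 'e) gis \<Rightarrow> 's"
  assumes E: "dense_CLP_embedding \<tau> (gis_mult sr) S mS h"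
begin

lemma HS: "Hausdorff_space S" using E by (simp add: dense_CLP_embedding_def)
lemma tS: "topological_semigroup S mS" using E by (simp add: dense_CLP_embedding_def)
lemma clp: "CLP_compact S" using E by (simp add: dense_CLP_embedding_def)
lemma hmap: "homeomorphic_map \<tau> (subtopology S (h ` topspace \<tau>)) h"
  using E by (simp add: dense_CLP_embedding_def embedding_map_def)
lemma hom: "x \<in> topspace \<tau> \<Longrightarrow> y \<in> topspace \<tau> \<Longrightarrow> h (m x y) = mS (h x) (h y)"
  using E by (simp add: dense_CLP_embedding_def)
lemma dense: "S closure_of (h ` topspace \<tau>) = topspace S"
  using E by (simp add: dense_CLP_embedding_def)

lemma h_in: "x \<in> topspace \<tau> \<Longrightarrow> h x \<in> topspace S"
  using homeomorphic_imp_surjective_map[OF hmap] by auto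

lemma h_inj: "inj_on h (topspace \<tau>)"
  by (rule homeomorphic_imp_injective_map[OF hmap])

lemma mS_in: "x \<in> topspace S \<Longrightarrow> y \<in> topspace S \<Longrightarrow> mS x y \<in> topspace S"
  using tS by (simp add: topological_semigroup_def)

lemma h_open:
  assumes "openin \<tau> U"
  obtains Ob where "openin S Ob" "h ` U = Ob \<inter> h ` topspace \<tau>"
proof -
  have "openin (subtopology S (h ` topspace \<tau>)) (h ` U)"
    using homeomorphic_map_openness[OF hmap openin_subset[OF assms]] assms by simp
  then show ?thesis using that unfolding openin_subtopology by blast
qed

lemma dense_meet:
  assumes "openin S Ob" "s \<in> Ob"
  shows "\<exists>g\<in>topspace \<tau>. h g \<in> Ob"
proof -
  have "s \<in> S closure_of (h ` topspace \<tau>)" using dense openin_subset[OF assms(1)] assms(2) by auto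
  then have "\<exists>y. y \<in> h ` topspace \<tau> \<and> y \<in> Ob" unfolding in_closure_of using assms by blast
  then show ?thesis by blast
qed

abbreviation "z0 \<equiv> h None"

lemma z0_in: "z0 \<in> topspace S" using h_in None_G by simp

lemma zeroR:
  assumes "\<sigma> \<in> topspace S"
  shows "mS \<sigma> z0 = z0"
proof (rule ccontr)
  assume ne: "mS \<sigma> z0 \<noteq> z0"
  obtain P Z where PZ: "openin S P" "openin S Z" "mS \<sigma> z0 \<in> P" "z0 \<in> Z" "P \<inter> Z = {}"
    using haus_sep[OF HS mS_in[OF assms z0_in] z0_in ne] by blast
  define M where "M = {\<rho> \<in> topspace S. mS \<rho> z0 \<in> P}"
  have "openin S M" unfolding M_def
    by (rule openin_continuous_map_preimage[OF ts_right_cont[OF tS z0_in] PZ(1)])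
  moreover have "\<sigma> \<in> M" using M_def assms PZ by simp
  ultimately obtain g where g: "g \<in> topspace \<tau>" "h g \<in> M" using dense_meet by blast
  then have "mS (h g) z0 \<in> P" using M_def by simp
  moreover have "mS (h g) z0 = z0" using hom[OF g(1) None_G] by simp
  ultimately have "z0 \<in> P" by simp
  then show False using PZ(4,5) by auto
qed

lemma zeroL:
  assumes "\<sigma> \<in> topspace S"
  shows "mS z0 \<sigma> = z0"
proof (rule ccontr)
  assume ne: "mS z0 \<sigma> \<noteq> z0"
  obtain P Z where PZ: "openin S P" "openin S Z" "mS z0 \<sigma> \<in> P" "z0 \<in> Z" "P \<inter> Z = {}"
    using haus_sep[OF HS mS_in[OF z0_in assms] z0_in ne] by blast
  define M where "M = {\<rho> \<in> topspace S. mS z0 \<rho> \<in> P}"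
  have "openin S M" unfolding M_def
    by (rule openin_continuous_map_preimage[OF ts_left_cont[OF tS z0_in] PZ(1)])
  moreover have "\<sigma> \<in> M" using M_def assms PZ by simp
  ultimately obtain g where g: "g \<in> topspace \<tau>" "h g \<in> M" using dense_meet by blast
  then have "mS z0 (h g) \<in> P" using M_def by simp
  moreover have "mS z0 (h g) = z0" using hom[OF None_G g(1)] by simp
  ultimately have "z0 \<in> P" by simp
  then show False using PZ(4,5) by auto
qed

lemma isoS:
  assumes "g \<in> topspace \<tau>" "g \<noteq> None"
  shows "openin S {h g}"
proof -
  obtain Ob where Ob: "openin S Ob" "h ` {g} = Ob \<inter> h ` topspace \<tau>"
    using h_open[OF iso[OF assms]] by blast
  have hgO: "h g \<in> Ob" using Ob(2) by blast
  have "Ob \<subseteq> {h g}"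
  proof
    fix \<sigma> assume \<sigma>: "\<sigma> \<in> Ob"
    show "\<sigma> \<in> {h g}"
    proof (rule ccontr)
      assume "\<sigma> \<notin> {h g}"
      then have ne: "\<sigma> \<noteq> h g" by simp
      have \<sigma>S: "\<sigma> \<in> topspace S" using openin_subset[OF Ob(1)] \<sigma> by blast
      obtain P Q where PQ: "openin S P" "openin S Q" "\<sigma> \<in> P" "h g \<in> Q" "P \<inter> Q = {}"
        using haus_sep[OF HS \<sigma>S h_in[OF assms(1)] ne] by metis
      have "openin S (Ob \<inter> P)" using Ob(1) PQ(1) by blast
      then obtain g' where g': "g' \<in> topspace \<tau>" "h g' \<in> Ob \<inter> P"
        using dense_meet[of "Ob \<inter> P" \<sigma>] \<sigma> PQ(3) by blast
      then have "h g' \<in> h ` {g}" using Ob(2) by blast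
      then have "h g' = h g" by simp
      then have "h g \<in> P" using g'(2) by simp
      then show False using PQ(4,5) by auto
    qed
  qed
  then have "Ob = {h g}" using hgO by auto
  then show ?thesis using Ob(1) by simp
qed

end

context gemb begin

lemma t1S: "\<forall>F. finite F \<and> F \<subseteq> topspace S \<longrightarrow> closedin S F"
  using Hausdorff_imp_t1_space[OF HS] unfolding t1_space_closedin_finite .

lemma cluster_set:
  assumes X: "X \<subseteq> h ` (topspace \<tau> - {None})" and inf: "infinite X"
  shows "\<exists>s\<in>topspace S. \<forall>N. openin S N \<and> s \<in> N \<longrightarrow> infinite (N \<inter> X)"
proof (rule ccontr)
  assume "\<not> ?thesis"
  then have H: "\<forall>s\<in>topspace S. \<exists>N. openin S N \<and> s \<in> N \<and> finite (N \<inter> X)" by blast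
  have XS: "X \<subseteq> topspace S" using X h_in by blast
  have Xopen: "openin S X" unfolding openin_subopen[of S X]
  proof
    fix x assume "x \<in> X"
    then obtain g where g: "g \<in> topspace \<tau>" "g \<noteq> None" "x = h g" using X by blast
    then have "openin S {x}" using isoS by simp
    then show "\<exists>T. openin S T \<and> x \<in> T \<and> T \<subseteq> X" using \<open>x \<in> X\<close> by blast
  qed
  have Cop: "openin S (topspace S - X)" unfolding openin_subopen[of S "topspace S - X"]
  proof
    fix s assume s: "s \<in> topspace S - X"
    then obtain N where N: "openin S N" "s \<in> N" "finite (N \<inter> X)" using H by blast
    have "N \<inter> X \<subseteq> topspace S" using XS by blast
    then have "closedin S (N \<inter> X)" using t1S N(3) by simp
    then have "openin S (N - (N \<inter> X))" by (rule openin_diff[OF N(1)])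
    moreover have "s \<in> N - (N \<inter> X)" using s N(2) by blast
    moreover have "N - (N \<inter> X) \<subseteq> topspace S - X" using openin_subset[OF N(1)] by blast
    ultimately show "\<exists>T. openin S T \<and> s \<in> T \<and> T \<subseteq> topspace S - X" by blast
  qed
  have Ccl: "closedin S (topspace S - X)" by (rule closedin_diff[OF closedin_topspace Xopen])
  define \<U> where "\<U> = insert (topspace S - X) ((\<lambda>x. {x}) ` X)"
  have clop: "\<forall>U\<in>\<U>. closedin S U \<and> openin S U"
  proof
    fix U assume "U \<in> \<U>"
    then consider "U = topspace S - X" | x where "x \<in> X" "U = {x}" using \<U>_def by blast
    then show "closedin S U \<and> openin S U"
    proof cases
      case 1 then show ?thesis using Ccl Cop by simp
    next
      case 2
      then obtain g where g: "g \<in> topspace \<tau>" "g \<noteq> None" "x = h g" using X by blast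
      have "openin S {x}" using isoS g by simp
      moreover have "{x} \<subseteq> topspace S" using XS 2(1) by blast
      then have "closedin S {x}" using t1S by simp
      ultimately show ?thesis using 2(2) by simp
    qed
  qed
  have cov: "topspace S \<subseteq> \<Union>\<U>" using \<U>_def by blast
  have "\<exists>\<F>\<subseteq>\<U>. finite \<F> \<and> topspace S \<subseteq> \<Union>\<F>"
    using clp[unfolded CLP_compact_def, rule_format, OF conjI[OF clop cov]] .
  then obtain \<F> where F: "\<F> \<subseteq> \<U>" "finite \<F>" "topspace S \<subseteq> \<Union>\<F>" by blast
  have "X \<subseteq> \<Union>(\<F> - {topspace S - X})" using F(3) XS by blast
  moreover have "finite (\<Union>(\<F> - {topspace S - X}))"
  proof (rule finite_Union)
    show "finite (\<F> - {topspace S - X})" using F(2) by simp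
    fix M assume "M \<in> \<F> - {topspace S - X}"
    then have "M \<in> (\<lambda>x. {x}) ` X" using F(1) \<U>_def by blast
    then show "finite M" by blast
  qed
  ultimately have "finite X" by (rule finite_subset)
  then show False using inf by simp
qed

lemma cluster_fun:
  assumes b: "b ` J \<subseteq> topspace \<tau>" and inf: "infinite J"
  shows "\<exists>s\<in>topspace S. \<forall>N. openin S N \<and> s \<in> N \<longrightarrow> infinite {i\<in>J. h (b i) \<in> N}"
proof (cases "finite (b ` J)")
  case True
  obtain a0 where a0: "a0 \<in> J" "infinite {a\<in>J. b a = b a0}"
    using pigeonhole_infinite[OF inf True] by blast
  have "h (b a0) \<in> topspace S" using h_in b a0(1) by blast
  moreover have "infinite {i\<in>J. h (b i) \<in> N}" if "openin S N" "h (b a0) \<in> N" for N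
  proof -
    have "{a\<in>J. b a = b a0} \<subseteq> {i\<in>J. h (b i) \<in> N}" using that by auto
    then show ?thesis using a0(2) finite_subset by blast
  qed
  ultimately show ?thesis by blast
next
  case False
  define X where "X = h ` (b ` J - {None})"
  have Xsub: "X \<subseteq> h ` (topspace \<tau> - {None})" using X_def b by blast
  have "infinite (b ` J - {None})" using False by simp
  moreover have "inj_on h (b ` J - {None})" using h_inj b by (meson Diff_subset inj_on_subset subset_trans)
  ultimately have "infinite X" unfolding X_def using finite_imageD by blast
  then obtain s where s: "s \<in> topspace S" "\<forall>N. openin S N \<and> s \<in> N \<longrightarrow> infinite (N \<inter> X)"
    using cluster_set[OF Xsub] by blast
  have "infinite {i\<in>J. h (b i) \<in> N}" if "openin S N" "s \<in> N" for N
  proof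
    assume fin: "finite {i\<in>J. h (b i) \<in> N}"
    have "N \<inter> X \<subseteq> (\<lambda>i. h (b i)) ` {i\<in>J. h (b i) \<in> N}" using X_def by auto
    then have "finite (N \<inter> X)" using fin finite_subset by blast
    then show False using s that by blast
  qed
  then show ?thesis using s(1) by blast
qed

definition conv0 :: "'i set \<Rightarrow> ('i \<Rightarrow> 's) \<Rightarrow> bool" where
  "conv0 I x \<longleftrightarrow> (\<forall>W. openin S W \<and> z0 \<in> W \<longrightarrow> finite {i\<in>I. x i \<notin> W})"

lemma conv0_cong: "(\<And>i. i \<in> I \<Longrightarrow> x i = y i) \<Longrightarrow> conv0 I x \<Longrightarrow> conv0 I y"
  unfolding conv0_def
proof (intro allI impI)
  fix W assume eq: "\<And>i. i \<in> I \<Longrightarrow> x i = y i" and c: "\<forall>W. openin S W \<and> z0 \<in> W \<longrightarrow> finite {i \<in> I. x i \<notin> W}"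
    and W: "openin S W \<and> z0 \<in> W"
  have "{i \<in> I. y i \<notin> W} = {i \<in> I. x i \<notin> W}" using eq by auto
  then show "finite {i \<in> I. y i \<notin> W}" using c W by simp
qed

lemma infinite_pick:
  assumes "infinite A" "finite B"
  obtains a where "a \<in> A" "a \<notin> B"
proof -
  have "A - B \<noteq> {}" using assms by (metis finite_subset Diff_eq_empty_iff)
  then show ?thesis using that by blast
qed

lemma orth:
  assumes e: "e ` I \<subseteq> topspace \<tau>" and idem: "\<And>i. i \<in> I \<Longrightarrow> m (e i) (e i) = e i"
    and ort: "\<And>i j. i \<in> I \<Longrightarrow> j \<in> I \<Longrightarrow> i \<noteq> j \<Longrightarrow> m (e i) (e j) = None"
  shows "conv0 I (\<lambda>i. h (e i))"
  unfolding conv0_def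
proof (intro allI impI)
  fix W assume W: "openin S W \<and> z0 \<in> W"
  define J where "J = {i\<in>I. h (e i) \<notin> W}"
  show "finite {i\<in>I. h (e i) \<notin> W}"
  proof (rule ccontr)
    assume "infinite {i\<in>I. h (e i) \<notin> W}"
    then have infJ: "infinite J" using J_def by simp
    have eJ: "e ` J \<subseteq> topspace \<tau>" using e J_def by blast
    obtain s where s: "s \<in> topspace S" "\<And>N. openin S N \<Longrightarrow> s \<in> N \<Longrightarrow> infinite {i\<in>J. h (e i) \<in> N}"
      using cluster_fun[OF eJ infJ] by blast
    have he: "h (e i) \<in> topspace S" if "i \<in> I" for i using h_in e that by blast
    have heJ: "i \<in> I" if "i \<in> J" for i using that J_def by simp
    have step1: "mS s s = s"
    proof (rule ccontr)
      assume ne: "mS s s \<noteq> s"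
      obtain P Q where PQ: "openin S P" "openin S Q" "mS s s \<in> P" "s \<in> Q" "P \<inter> Q = {}"
        using haus_sep[OF HS mS_in[OF s(1) s(1)] s(1) ne] by metis
      obtain A B where AB: "openin S A" "openin S B" "s \<in> A" "s \<in> B"
          "\<And>a b. a \<in> A \<Longrightarrow> b \<in> B \<Longrightarrow> mS a b \<in> P"
        using ts_nbhd[OF tS s(1) s(1) PQ(1) PQ(3)] by metis
      have "openin S (A \<inter> B \<inter> Q)" using AB PQ by blast
      then have "infinite {i\<in>J. h (e i) \<in> A \<inter> B \<inter> Q}" using s(2) AB PQ by blast
      then obtain i where i: "i \<in> J" "h (e i) \<in> A \<inter> B \<inter> Q"
        by (metis (mono_tags, lifting) empty_Collect_eq finite.emptyI)
      have "mS (h (e i)) (h (e i)) \<in> P" using AB(5) i(2) by blast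
      moreover have "mS (h (e i)) (h (e i)) = h (e i)"
        using hom[of "e i" "e i"] idem[OF heJ[OF i(1)]] e heJ[OF i(1)] by auto
      ultimately have "h (e i) \<in> P" by simp
      then show False using i(2) PQ(5) by auto
    qed
    have step2: "mS (h (e k)) s = z0" if k: "k \<in> I" for k
    proof (rule ccontr)
      assume ne: "mS (h (e k)) s \<noteq> z0"
      obtain P Z where PZ: "openin S P" "openin S Z" "mS (h (e k)) s \<in> P" "z0 \<in> Z" "P \<inter> Z = {}"
        using haus_sep[OF HS mS_in[OF he[OF k] s(1)] z0_in ne] by metis
      obtain A B where AB: "openin S A" "openin S B" "h (e k) \<in> A" "s \<in> B"
          "\<And>a b. a \<in> A \<Longrightarrow> b \<in> B \<Longrightarrow> mS a b \<in> P"
        using ts_nbhd[OF tS he[OF k] s(1) PZ(1) PZ(3)] by metis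
      have "infinite {i\<in>J. h (e i) \<in> B}" using s(2) AB by blast
      then obtain i where i: "i \<in> {i\<in>J. h (e i) \<in> B}" "i \<notin> {k}"
        using infinite_pick[of "{i\<in>J. h (e i) \<in> B}" "{k}"] by blast
      have inP: "mS (h (e k)) (h (e i)) \<in> P" using AB(5)[OF AB(3)] i(1) by blast
      have iI: "i \<in> I" using heJ i(1) by simp
      have ek: "e k \<in> topspace \<tau>" using e k by blast
      have ei: "e i \<in> topspace \<tau>" using e iI by blast
      have "i \<noteq> k" using i(2) by simp
      then have "m (e k) (e i) = None" using ort[OF k iI] by simp
      then have "mS (h (e k)) (h (e i)) = z0" using hom[OF ek ei] by simp
      then have "z0 \<in> P" using inP by simp
      then show False using PZ(4,5) by auto
    qed
    have step3: "mS s s = z0"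
    proof (rule ccontr)
      assume ne: "mS s s \<noteq> z0"
      obtain P Z where PZ: "openin S P" "openin S Z" "mS s s \<in> P" "z0 \<in> Z" "P \<inter> Z = {}"
        using haus_sep[OF HS mS_in[OF s(1) s(1)] z0_in ne] by metis
      obtain A B where AB: "openin S A" "openin S B" "s \<in> A" "s \<in> B"
          "\<And>a b. a \<in> A \<Longrightarrow> b \<in> B \<Longrightarrow> mS a b \<in> P"
        using ts_nbhd[OF tS s(1) s(1) PZ(1) PZ(3)] by metis
      have "infinite {i\<in>J. h (e i) \<in> A}" using s(2) AB by blast
      then obtain i where i: "i \<in> J" "h (e i) \<in> A"
        by (metis (mono_tags, lifting) empty_Collect_eq finite.emptyI)
      have "mS (h (e i)) s \<in> P" using AB(5)[OF i(2) AB(4)] .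
      moreover have "mS (h (e i)) s = z0" using step2 heJ[OF i(1)] by simp
      ultimately have "z0 \<in> P" by simp
      then show False using PZ(4,5) by auto
    qed
    have "s = z0" using step1 step3 by simp
    then have "infinite {i\<in>J. h (e i) \<in> W}" using s(2) W by blast
    moreover have "{i\<in>J. h (e i) \<in> W} = {}" using J_def by auto
    ultimately show False by simp
  qed
qed

lemma propR:
  assumes a: "a ` I \<subseteq> topspace \<tau>" and b: "b ` I \<subseteq> topspace \<tau>" and c: "conv0 I (\<lambda>i. h (a i))"
  shows "conv0 I (\<lambda>i. h (m (b i) (a i)))"
  unfolding conv0_def
proof (intro allI impI)
  fix W assume W: "openin S W \<and> z0 \<in> W"
  define J where "J = {i\<in>I. h (m (b i) (a i)) \<notin> W}"
  show "finite {i\<in>I. h (m (b i) (a i)) \<notin> W}"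
  proof (rule ccontr)
    assume "infinite {i\<in>I. h (m (b i) (a i)) \<notin> W}"
    then have infJ: "infinite J" using J_def by simp
    have bJ: "b ` J \<subseteq> topspace \<tau>" using b J_def by blast
    obtain s where s: "s \<in> topspace S" "\<And>N. openin S N \<Longrightarrow> s \<in> N \<Longrightarrow> infinite {i\<in>J. h (b i) \<in> N}"
      using cluster_fun[OF bJ infJ] by blast
    have "mS s z0 \<in> W" using zeroR[OF s(1)] W by simp
    then obtain A B where AB: "openin S A" "openin S B" "s \<in> A" "z0 \<in> B"
        "\<And>x y. x \<in> A \<Longrightarrow> y \<in> B \<Longrightarrow> mS x y \<in> W"
      using ts_nbhd[OF tS s(1) z0_in] W by metis
    have fin: "finite {i\<in>I. h (a i) \<notin> B}" using c AB unfolding conv0_def by blast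
    have "infinite {i\<in>J. h (b i) \<in> A}" using s(2) AB by blast
    then obtain i where i: "i \<in> {i\<in>J. h (b i) \<in> A}" "i \<notin> {i\<in>I. h (a i) \<notin> B}"
      using infinite_pick fin by blast
    have iI: "i \<in> I" using i(1) J_def by simp
    have "h (a i) \<in> B" using i iI by simp
    then have "mS (h (b i)) (h (a i)) \<in> W" using AB(5) i(1) by simp
    moreover have "h (m (b i) (a i)) = mS (h (b i)) (h (a i))" using hom a b iI by blast
    ultimately have "h (m (b i) (a i)) \<in> W" by simp
    then show False using i(1) J_def by simp
  qed
qed

lemma propL:
  assumes a: "a ` I \<subseteq> topspace \<tau>" and b: "b ` I \<subseteq> topspace \<tau>" and c: "conv0 I (\<lambda>i. h (a i))"
  shows "conv0 I (\<lambda>i. h (m (a i) (b i)))"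
  unfolding conv0_def
proof (intro allI impI)
  fix W assume W: "openin S W \<and> z0 \<in> W"
  define J where "J = {i\<in>I. h (m (a i) (b i)) \<notin> W}"
  show "finite {i\<in>I. h (m (a i) (b i)) \<notin> W}"
  proof (rule ccontr)
    assume "infinite {i\<in>I. h (m (a i) (b i)) \<notin> W}"
    then have infJ: "infinite J" using J_def by simp
    have bJ: "b ` J \<subseteq> topspace \<tau>" using b J_def by blast
    obtain s where s: "s \<in> topspace S" "\<And>N. openin S N \<Longrightarrow> s \<in> N \<Longrightarrow> infinite {i\<in>J. h (b i) \<in> N}"
      using cluster_fun[OF bJ infJ] by blast
    have "mS z0 s \<in> W" using zeroL[OF s(1)] W by simp
    then obtain A B where AB: "openin S A" "openin S B" "z0 \<in> A" "s \<in> B"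
        "\<And>x y. x \<in> A \<Longrightarrow> y \<in> B \<Longrightarrow> mS x y \<in> W"
      using ts_nbhd[OF tS z0_in s(1)] W by metis
    have fin: "finite {i\<in>I. h (a i) \<notin> A}" using c AB unfolding conv0_def by blast
    have "infinite {i\<in>J. h (b i) \<in> B}" using s(2) AB by blast
    then obtain i where i: "i \<in> {i\<in>J. h (b i) \<in> B}" "i \<notin> {i\<in>I. h (a i) \<notin> A}"
      using infinite_pick fin by blast
    have iI: "i \<in> I" using i(1) J_def by simp
    have "h (a i) \<in> A" using i iI by simp
    then have "mS (h (a i)) (h (b i)) \<in> W" using AB(5) i(1) by simp
    moreover have "h (m (a i) (b i)) = mS (h (a i)) (h (b i))" using hom a b iI by blast
    ultimately have "h (m (a i) (b i)) \<in> W" by simp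
    then show False using i(1) J_def by simp
  qed
qed

end

context gemb begin

lemma decomp:
  assumes "c \<in> topspace \<tau>" "c \<noteq> None"
  shows "c = Some (fst (the c), fst (snd (the c)), snd (snd (the c)))"
    "gpath V Ed sr rg (fst (the c)) (snd (snd (the c)))"
    "gpath V Ed sr rg (fst (snd (the c))) (snd (snd (the c)))"
proof -
  obtain p q w where c: "c = Some (p,q,w)" using assms(2) by (cases c) auto
  have "gpath V Ed sr rg p w" "gpath V Ed sr rg q w" using assms(1) c carrier inG by auto
  then show "c = Some (fst (the c), fst (snd (the c)), snd (snd (the c)))"
    "gpath V Ed sr rg (fst (the c)) (snd (snd (the c)))"
    "gpath V Ed sr rg (fst (snd (the c))) (snd (snd (the c)))" using c by simp_all
qed

lemma comb:
  assumes C: "C \<subseteq> topspace \<tau> - {None}" and inf: "infinite C"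
  shows "\<exists>I\<subseteq>C. infinite I \<and> conv0 I (\<lambda>i. h i)"
proof -
  define cp where "cp = (\<lambda>c::('v,'e) gis. fst (the c))"
  define cq where "cq = (\<lambda>c::('v,'e) gis. fst (snd (the c)))"
  define cw where "cw = (\<lambda>c::('v,'e) gis. snd (snd (the c)))"
  have dc: "c = Some (cp c, cq c, cw c)" "gpath V Ed sr rg (cp c) (cw c)" "gpath V Ed sr rg (cq c) (cw c)"
    "cw c \<in> V" if "c \<in> C" for c
  proof -
    have c0: "c \<in> topspace \<tau> - {None}" using that C by blast
    have c1: "c \<in> topspace \<tau>" "c \<noteq> None" using c0 by (metis DiffD1, metis DiffD2 singletonI)
    show "c = Some (cp c, cq c, cw c)" "gpath V Ed sr rg (cp c) (cw c)" "gpath V Ed sr rg (cq c) (cw c)"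
      using decomp[OF c1] unfolding cp_def cq_def cw_def by simp_all
    then show "cw c \<in> V" using gpath_V by blast
  qed
  show ?thesis
  proof (cases "finite (cw ` C)")
    case False
    obtain I where I: "I \<subseteq> C" "infinite I" "inj_on cw I" using choose_inj[OF False] by blast
    define vtx where "vtx = (\<lambda>c. Some ([],[],cw c) :: ('v,'e) gis)"
    define pth where "pth = (\<lambda>c. Some (cp c,[],cw c) :: ('v,'e) gis)"
    define ivp where "ivp = (\<lambda>c. Some ([],cq c,cw c) :: ('v,'e) gis)"
    have cI: "c \<in> C" if "c \<in> I" for c using I(1) that by blast
    have vI: "vtx ` I \<subseteq> topspace \<tau>"
    proof
      fix x assume "x \<in> vtx ` I"
      then obtain c where c: "c \<in> I" "x = vtx c" by blast
      show "x \<in> topspace \<tau>" unfolding c(2) vtx_def carrier inG gpath_nil using dc(4)[OF cI[OF c(1)]] by simp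
    qed
    have pI: "pth ` I \<subseteq> topspace \<tau>"
    proof
      fix x assume "x \<in> pth ` I"
      then obtain c where c: "c \<in> I" "x = pth c" by blast
      show "x \<in> topspace \<tau>" unfolding c(2) pth_def carrier inG gpath_nil
        using dc(2,4)[OF cI[OF c(1)]] by simp
    qed
    have qI: "ivp ` I \<subseteq> topspace \<tau>"
    proof
      fix x assume "x \<in> ivp ` I"
      then obtain c where c: "c \<in> I" "x = ivp c" by blast
      show "x \<in> topspace \<tau>" unfolding c(2) ivp_def carrier inG gpath_nil
        using dc(3,4)[OF cI[OF c(1)]] by simp
    qed
    have c1: "conv0 I (\<lambda>i. h (vtx i))"
    proof (rule orth[OF vI])
      fix i assume "i \<in> I" show "m (vtx i) (vtx i) = vtx i" unfolding vtx_def by (rule W0W0)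
    next
      fix i j assume ij: "i \<in> I" "j \<in> I" "i \<noteq> j"
      then have "cw i \<noteq> cw j" using I(3) by (meson inj_onD)
      then show "m (vtx i) (vtx j) = None" unfolding vtx_def by (rule VO)
    qed
    have "conv0 I (\<lambda>i. h (m (pth i) (vtx i)))" by (rule propR[OF vI pI c1])
    then have c2: "conv0 I (\<lambda>i. h (pth i))"
      by (rule conv0_cong[rotated]) (simp add: pth_def vtx_def PV)
    have "conv0 I (\<lambda>i. h (m (pth i) (ivp i)))" by (rule propL[OF pI qI c2])
    then have "conv0 I (\<lambda>i. h i)"
    proof (rule conv0_cong[rotated])
      fix i assume "i \<in> I"
      then have "i = Some (cp i, cq i, cw i)" using dc(1) cI by blast
      then show "h (m (pth i) (ivp i)) = h i" unfolding pth_def ivp_def using PQ by metis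
    qed
    then show ?thesis using I by blast
  next
    case True
    obtain c0 where c0: "c0 \<in> C" "infinite {a\<in>C. cw a = cw c0}"
      using pigeonhole_infinite[OF inf True] by blast
    define w where "w = cw c0"
    define Cw where "Cw = {a\<in>C. cw a = w}"
    have infCw: "infinite Cw" using c0 Cw_def w_def by simp
    have CwC: "Cw \<subseteq> C" using Cw_def by blast
    have dw: "c = Some (cp c, cq c, w)" "gpath V Ed sr rg (cp c) w" "gpath V Ed sr rg (cq c) w"
      if "c \<in> Cw" for c
      using dc[of c] that Cw_def by auto
    have "infinite (cp ` Cw) \<or> infinite (cq ` Cw)"
    proof (rule ccontr)
      assume "\<not> ?thesis"
      then have "finite (cp ` Cw \<times> cq ` Cw)" by simp
      then have "finite ((\<lambda>(p,q). Some (p,q,w)) ` (cp ` Cw \<times> cq ` Cw))" by simp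
      moreover have "Cw \<subseteq> (\<lambda>(p,q). Some (p,q,w)) ` (cp ` Cw \<times> cq ` Cw)"
      proof
        fix c assume "c \<in> Cw"
        then have "c = (\<lambda>(p,q). Some (p,q,w)) (cp c, cq c)" using dw by simp
        then show "c \<in> (\<lambda>(p,q). Some (p,q,w)) ` (cp ` Cw \<times> cq ` Cw)" using \<open>c \<in> Cw\<close> by blast
      qed
      ultimately show False using infCw finite_subset by blast
    qed
    then show ?thesis
    proof
      assume "infinite (cp ` Cw)"
      then obtain I where I: "I \<subseteq> Cw" "infinite I" "inj_on cp I" using choose_inj by blast
      have cI: "c \<in> Cw" if "c \<in> I" for c using I(1) that by blast
      define E where "E = (\<lambda>c. Some (cp c, cp c, w) :: ('v,'e) gis)"
      have EI: "E ` I \<subseteq> topspace \<tau>"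
      proof
        fix x assume "x \<in> E ` I"
        then obtain c where c: "c \<in> I" "x = E c" by blast
        show "x \<in> topspace \<tau>" unfolding c(2) E_def carrier inG using dw(2)[OF cI[OF c(1)]] by simp
      qed
      have idI: "(\<lambda>i. i) ` I \<subseteq> topspace \<tau>" using I(1) CwC C by auto
      have c1: "conv0 I (\<lambda>i. h (E i))"
      proof (rule orth[OF EI])
        fix i assume "i \<in> I" show "m (E i) (E i) = E i" unfolding E_def by (rule EE)
      next
        fix i j assume ij: "i \<in> I" "j \<in> I" "i \<noteq> j"
        then have "cp i \<noteq> cp j" using I(3) by (meson inj_onD)
        then show "m (E i) (E j) = None" unfolding E_def
          using ORTH dw(2)[OF cI[OF ij(1)]] dw(2)[OF cI[OF ij(2)]] by blast
      qed
      have "conv0 I (\<lambda>i. h (m (E i) i))" using propL[OF EI idI c1] by simp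
      then have "conv0 I (\<lambda>i. h i)"
      proof (rule conv0_cong[rotated])
        fix i assume "i \<in> I"
        then have "i = Some (cp i, cq i, w)" using dw(1) cI by blast
        then show "h (m (E i) i) = h i" unfolding E_def using EC by metis
      qed
      then show ?thesis using I CwC by blast
    next
      assume "infinite (cq ` Cw)"
      then obtain I where I: "I \<subseteq> Cw" "infinite I" "inj_on cq I" using choose_inj by blast
      have cI: "c \<in> Cw" if "c \<in> I" for c using I(1) that by blast
      define E where "E = (\<lambda>c. Some (cq c, cq c, w) :: ('v,'e) gis)"
      have EI: "E ` I \<subseteq> topspace \<tau>"
      proof
        fix x assume "x \<in> E ` I"
        then obtain c where c: "c \<in> I" "x = E c" by blast
        show "x \<in> topspace \<tau>" unfolding c(2) E_def carrier inG using dw(3)[OF cI[OF c(1)]] by simp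
      qed
      have idI: "(\<lambda>i. i) ` I \<subseteq> topspace \<tau>" using I(1) CwC C by auto
      have c1: "conv0 I (\<lambda>i. h (E i))"
      proof (rule orth[OF EI])
        fix i assume "i \<in> I" show "m (E i) (E i) = E i" unfolding E_def by (rule EE)
      next
        fix i j assume ij: "i \<in> I" "j \<in> I" "i \<noteq> j"
        then have "cq i \<noteq> cq j" using I(3) by (meson inj_onD)
        then show "m (E i) (E j) = None" unfolding E_def
          using ORTH dw(3)[OF cI[OF ij(1)]] dw(3)[OF cI[OF ij(2)]] by blast
      qed
      have "conv0 I (\<lambda>i. h (m i (E i)))" using propR[OF EI idI c1] by simp
      then have "conv0 I (\<lambda>i. h i)"
      proof (rule conv0_cong[rotated])
        fix i assume "i \<in> I"
        then have "i = Some (cp i, cq i, w)" using dw(1) cI by blast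
        then show "h (m i (E i)) = h i" unfolding E_def using CF by metis
      qed
      then show ?thesis using I CwC by blast
    qed
  qed
qed

lemma cof_emb:
  assumes U: "openin \<tau> U" and N: "None \<in> U"
  shows "finite (topspace \<tau> - U)"
proof (rule ccontr)
  assume inf: "infinite (topspace \<tau> - U)"
  have "topspace \<tau> - U \<subseteq> topspace \<tau> - {None}" using N by blast
  then obtain I where I: "I \<subseteq> topspace \<tau> - U" "infinite I" "conv0 I (\<lambda>i. h i)"
    using comb inf by blast
  obtain Ob where Ob: "openin S Ob" "h ` U = Ob \<inter> h ` topspace \<tau>" using h_open[OF U] by blast
  have "z0 \<in> Ob" using Ob(2) N by blast
  then have fin: "finite {i\<in>I. h i \<notin> Ob}" using I(3) Ob(1) unfolding conv0_def by blast
  have "{i\<in>I. h i \<notin> Ob} = I"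
  proof (rule set_eqI, rule iffI)
    fix i assume "i \<in> I"
    have "h i \<notin> Ob"
    proof
      assume "h i \<in> Ob"
      then have "h i \<in> h ` U" using Ob(2) I(1) \<open>i \<in> I\<close> by blast
      then obtain u where u: "u \<in> U" "h i = h u" by blast
      have "u \<in> topspace \<tau>" using openin_subset[OF U] u(1) by blast
      moreover have "i \<in> topspace \<tau>" using I(1) \<open>i \<in> I\<close> by blast
      ultimately have "i = u" using h_inj u(2) by (metis inj_onD)
      then show False using u(1) I(1) \<open>i \<in> I\<close> by blast
    qed
    then show "i \<in> {i\<in>I. h i \<notin> Ob}" using \<open>i \<in> I\<close> by blast
  qed simp
  then show False using fin I(2) by simp
qed

end

theorem theorem4p1:
  fixes V :: "'v set" and Ed :: "'e set" and sr rg :: "'e \<Rightarrow> 'v"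
    and \<tau> :: "('v, 'e) gis topology"
  assumes graph: "\<forall>e\<in>Ed. sr e \<in> V \<and> rg e \<in> V"
    and acyc: "graph_acyclic V Ed sr rg"
    and carrier: "topspace \<tau> = gis_carrier V Ed sr rg"
    and haus: "Hausdorff_space \<tau>"
    and tsg: "topological_semigroup \<tau> (gis_mult sr)"
  shows "((\<exists>(S :: 's topology) mS h. dense_CLP_embedding \<tau> (gis_mult sr) S mS h)
            \<longrightarrow> compact_space \<tau>)
       \<and> (compact_space \<tau> \<longrightarrow>
            (\<exists>(S :: ('v, 'e) gis topology) mS h. dense_CLP_embedding \<tau> (gis_mult sr) S mS h))
       \<and> (compact_space \<tau> \<longleftrightarrow> is_tau_c V Ed sr rg \<tau>)"
proof -
  have gi: "gist V Ed sr rg \<tau>"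
    unfolding gist_def gisl_def gist_axioms_def using graph acyc carrier haus tsg by simp
  interpret g: gist V Ed sr rg \<tau> by (rule gi)
  have P1: "(\<exists>(S :: 's topology) mS h. dense_CLP_embedding \<tau> (gis_mult sr) S mS h) \<longrightarrow> compact_space \<tau>"
  proof
    assume "\<exists>(S :: 's topology) mS h. dense_CLP_embedding \<tau> (gis_mult sr) S mS h"
    then obtain S :: "'s topology" and mS h where E: "dense_CLP_embedding \<tau> (gis_mult sr) S mS h" by blast
    have ge: "gemb V Ed sr rg \<tau> S mS h"
      unfolding gemb_def gemb_axioms_def using gi E by simp
    interpret ge: gemb V Ed sr rg \<tau> S mS h by (rule ge)
    show "compact_space \<tau>" by (rule g.cofinite_compact) (rule ge.cof_emb)
  qed
  have P2: "compact_space \<tau> \<longrightarrow>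
            (\<exists>(S :: ('v, 'e) gis topology) mS h. dense_CLP_embedding \<tau> (gis_mult sr) S mS h)"
    using g.self_embedding by blast
  show ?thesis using P1 P2 g.tau_c_iff by blast
qed

end
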